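(* Let $\sigma$ be a realizable multiset. If $\sigma=\sigma_1\cup\dots\cup\sigma_k$ (union of multisets, i.e. $\sigma_1,\dots,\sigma_k$ partition $\sigma$ counting multiplicity), where each $\sigma_i$ is realizable, then $s_1(\sigma_i)\le s_1(\sigma)$ for every $i$.
   Context: A multiset $\sigma=\{\lambda_1,\dots,\lambda_n\}$ of complex numbers is realizable if there exists an $n\times n$ matrix with all entries real and nonnegative whose eigenvalues, counted with algebraic multiplicity, are exactly $\lambda_1,\dots,\lambda_n$. For a multiset $\tau$, $s_1(\tau)$ denotes the sum of its elements counted with multiplicity. *)

theory Defs
  imports "Jordan_Normal_Form.Char_Poly" "HOL-Library.Multiset"
begin

definition realizable :: "complex multiset \<Rightarrow> bool" where
  "realizable \<sigma> \<longleftrightarrow> (\<exists>n (A :: real mat).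
      A \<in> carrier_mat n n \<and>
      (\<forall>i<n. \<forall>j<n. A $$ (i, j) \<ge> 0) \<and>
      char_poly (map_mat complex_of_real A) = (\<Prod>a\<in>#\<sigma>. [:- a, 1:]))"

definition s1 :: "complex multiset \<Rightarrow> complex" where
  "s1 \<tau> = sum_mset \<tau>"

end

theory Submission
  imports Defs "Jordan_Normal_Form.Schur_Decomposition"
begin

definition tr :: "'a::comm_ring_1 mat \<Rightarrow> 'a" where
  "tr M = (\<Sum>i<dim_row M. M $$ (i,i))"

lemma tr_comm:
  fixes X Y :: "'a::comm_ring_1 mat"
  assumes "X \<in> carrier_mat n n" "Y \<in> carrier_mat n n"
  shows "tr (X * Y) = tr (Y * X)"
proof -
  have "tr (X * Y) = (\<Sum>i<n. \<Sum>k<n. X $$ (i,k) * Y $$ (k,i))"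
    using assms by (simp add: tr_def scalar_prod_def lessThan_atLeast0)
  also have "\<dots> = (\<Sum>k<n. \<Sum>i<n. Y $$ (k,i) * X $$ (i,k))"
    by (subst sum.swap) (simp add: mult.commute)
  also have "\<dots> = tr (Y * X)"
    using assms by (simp add: tr_def scalar_prod_def lessThan_atLeast0)
  finally show ?thesis .
qed

lemma tr_similar:
  fixes B U P Q :: "'a::comm_ring_1 mat"
  assumes "B \<in> carrier_mat n n" "similar_mat_wit B U P Q"
  shows "tr B = tr U"
proof -
  note d = similar_mat_witD2[OF assms]
  have "tr B = tr (P * (U * Q))" using d by (simp add: assoc_mult_mat[of P n n U n Q n])
  also have "\<dots> = tr ((U * Q) * P)" using d by (intro tr_comm[of _ n]) auto
  also have "\<dots> = tr (U * (Q * P))" using d by (simp add: assoc_mult_mat[of U n n Q n P n])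
  also have "\<dots> = tr U" using d by simp
  finally show ?thesis .
qed

lemma realizable_s1:
  assumes "realizable \<tau>"
  shows "\<exists>r::real. r \<ge> 0 \<and> s1 \<tau> = complex_of_real r"
proof -
  obtain n and A :: "real mat" where A: "A \<in> carrier_mat n n"
    and nn: "\<forall>i<n. \<forall>j<n. A $$ (i, j) \<ge> 0"
    and cp: "char_poly (map_mat complex_of_real A) = (\<Prod>a\<in>#\<tau>. [:- a, 1:])"
    using assms unfolding realizable_def by blast
  define B where "B = map_mat complex_of_real A"
  have B: "B \<in> carrier_mat n n" using A by (simp add: B_def)
  obtain es where es: "mset es = \<tau>" using ex_mset by blast
  have cp2: "char_poly B = (\<Prod>e\<leftarrow>es. [:- e, 1:])"
    using cp es unfolding B_def by (metis prod_mset_prod_list mset_map)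
  obtain U P Q where sd: "schur_decomposition B es = (U,P,Q)"
    by (cases "schur_decomposition B es") auto
  from schur_decomposition[OF B cp2 sd]
  have sim: "similar_mat_wit B U P Q" and dg: "diag_mat U = es" by auto
  have trU: "tr U = sum_list es"
    unfolding dg[symmetric] diag_mat_def tr_def
    by (simp add: sum_list_sum_nth lessThan_atLeast0)
  have "s1 \<tau> = tr B"
    unfolding s1_def es[symmetric] tr_similar[OF B sim] trU by (simp add: sum_mset_sum_list)
  also have "tr B = complex_of_real (\<Sum>i<n. A $$ (i,i))"
    using A by (simp add: tr_def B_def)
  finally show ?thesis using nn by (intro exI[of _ "\<Sum>i<n. A $$ (i,i)"]) (auto intro: sum_nonneg)
qed

lemma sum_list_parts:
  assumes "\<forall>\<tau> \<in> set parts. realizable \<tau>" "\<tau> \<in> set parts"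
  shows "\<exists>r::real. r \<ge> 0 \<and> s1 (sum_list parts) = s1 \<tau> + complex_of_real r"
  using assms
proof (induction parts)
  case Nil then show ?case by simp
next
  case (Cons a ps)
  obtain ra where ra: "ra \<ge> 0" "s1 a = complex_of_real ra"
    using realizable_s1 Cons.prems by auto
  show ?case
  proof (cases "\<tau> \<in> set ps")
    case True
    then obtain r where "r \<ge> 0" "s1 (sum_list ps) = s1 \<tau> + complex_of_real r"
      using Cons by auto
    then show ?thesis using ra
      by (intro exI[of _ "r + ra"]) (auto simp: s1_def)
  next
    case False
    then have t: "\<tau> = a" using Cons.prems by auto
    have "\<forall>p\<in>set ps. \<exists>r::real. r \<ge> 0 \<and> s1 p = complex_of_real r"
      using Cons.prems realizable_s1 by auto
    then have "\<exists>r::real. r \<ge> 0 \<and> s1 (sum_list ps) = complex_of_real r"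
    proof (induction ps)
      case Nil then show ?case by (simp add: s1_def)
    next
      case (Cons p qs)
      then obtain r1 r2 where "r1 \<ge> 0" "s1 p = complex_of_real r1" "r2 \<ge> 0"
        "s1 (sum_list qs) = complex_of_real r2" by auto
      then show ?case by (intro exI[of _ "r1 + r2"]) (auto simp: s1_def)
    qed
    then obtain r where "r \<ge> 0" "s1 (sum_list ps) = complex_of_real r" by auto
    then show ?thesis using t by (intro exI[of _ r]) (auto simp: s1_def)
  qed
qed

theorem lemma1:
  fixes \<sigma> :: "complex multiset" and parts :: "complex multiset list"
  assumes "realizable \<sigma>"
    and "\<sigma> = sum_list parts"
    and "\<forall>\<tau> \<in> set parts. realizable \<tau>"
  shows "\<forall>\<tau> \<in> set parts. Im (s1 \<tau>) = 0 \<and> Im (s1 \<sigma>) = 0 \<and> Re (s1 \<tau>) \<le> Re (s1 \<sigma>)"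
proof
  fix \<tau> assume t: "\<tau> \<in> set parts"
  obtain a where a: "s1 \<tau> = complex_of_real a" using realizable_s1 assms(3) t by blast
  obtain b where b: "s1 \<sigma> = complex_of_real b" using realizable_s1 assms(1) by blast
  obtain r where r: "r \<ge> 0" "s1 \<sigma> = s1 \<tau> + complex_of_real r"
    using sum_list_parts[OF assms(3) t] assms(2) by auto
  show "Im (s1 \<tau>) = 0 \<and> Im (s1 \<sigma>) = 0 \<and> Re (s1 \<tau>) \<le> Re (s1 \<sigma>)"
  proof -
    have "complex_of_real (a + r) = complex_of_real b" using a b r by simp
    then have "a + r = b" using of_real_eq_iff by blast
    then show ?thesis using a b r by simp
  qed
qed

end
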